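(* For $n\ge2$, there is no finite simple graph $G$ with independence number $n$ whose reduced independence polynomial $P=P_G$ satisfies $\frac{5}{2}P(z)+1=T_n\!\left(\frac{5}{2}z+1\right)$ for all $z$.
   Context: For a finite simple graph $G$, the independence polynomial is $I_G(z)=\sum_{i=0}^{\alpha} a_i z^i$, where $a_i$ is the number of sets of $i$ pairwise non-adjacent vertices and the independence number $\alpha$ is the largest such $i$; the reduced independence polynomial is $P_G=I_G-1$. $T_n$ is the Chebyshev polynomial of the first kind of degree $n$: $T_0=1$, $T_1(z)=z$, $T_n(z)=2zT_{n-1}(z)-T_{n-2}(z)$. *)

theory Defs
  imports Complex_Main
begin

definition simple_graph :: "'a set \<Rightarrow> ('a \<Rightarrow> 'a \<Rightarrow> bool) \<Rightarrow> bool" where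
  "simple_graph V E \<longleftrightarrow> finite V \<and> (\<forall>u v. E u v \<longrightarrow> u \<in> V \<and> v \<in> V)
     \<and> (\<forall>u v. E u v \<longrightarrow> E v u) \<and> (\<forall>v. \<not> E v v)"

definition independent_set :: "'a set \<Rightarrow> ('a \<Rightarrow> 'a \<Rightarrow> bool) \<Rightarrow> 'a set \<Rightarrow> bool" where
  "independent_set V E S \<longleftrightarrow> S \<subseteq> V \<and> (\<forall>u\<in>S. \<forall>v\<in>S. \<not> E u v)"

definition indep_count :: "'a set \<Rightarrow> ('a \<Rightarrow> 'a \<Rightarrow> bool) \<Rightarrow> nat \<Rightarrow> nat" where
  "indep_count V E i = card {S. independent_set V E S \<and> card S = i}"

definition independence_number :: "'a set \<Rightarrow> ('a \<Rightarrow> 'a \<Rightarrow> bool) \<Rightarrow> nat" where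
  "independence_number V E = Max (card ` {S. independent_set V E S})"

definition indep_poly :: "'a set \<Rightarrow> ('a \<Rightarrow> 'a \<Rightarrow> bool) \<Rightarrow> complex \<Rightarrow> complex" where
  "indep_poly V E z = (\<Sum>i = 0..independence_number V E. of_nat (indep_count V E i) * z ^ i)"

definition reduced_indep_poly :: "'a set \<Rightarrow> ('a \<Rightarrow> 'a \<Rightarrow> bool) \<Rightarrow> complex \<Rightarrow> complex" where
  "reduced_indep_poly V E z = indep_poly V E z - 1"

fun chebyshev_T :: "nat \<Rightarrow> complex \<Rightarrow> complex" where
  "chebyshev_T 0 z = 1"
| "chebyshev_T (Suc 0) z = z"
| "chebyshev_T (Suc (Suc n)) z = 2 * z * chebyshev_T (Suc n) z - chebyshev_T n z"

end

theory Submission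
  imports Defs "HOL-Computational_Algebra.Polynomial"
begin

fun Rp :: "nat \<Rightarrow> complex poly" where
  "Rp 0 = 1"
| "Rp (Suc 0) = [:1, 5/2:]"
| "Rp (Suc (Suc n)) = smult 2 ([:1, 5/2:] * Rp (Suc n)) - Rp n"

lemma poly_Rp: "poly (Rp n) z = chebyshev_T n (5/2*z+1)"
  by (induction n rule: Rp.induct) (simp_all add: algebra_simps)

definition c1 :: "complex \<Rightarrow> complex" where "c1 x = 5/2 * x^2"
definition c2 :: "complex \<Rightarrow> complex" where "c2 x = 25/24 * x^2 * (x^2 - 1)"
definition c3 :: "complex \<Rightarrow> complex" where "c3 x = 125/720 * x^2 * (x^2 - 1) * (x^2 - 4)"

lemma coeff_Rp:
  "coeff (Rp n) 0 = 1 \<and> coeff (Rp n) 1 = c1 (of_nat n) \<and>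
   coeff (Rp n) 2 = c2 (of_nat n) \<and> coeff (Rp n) 3 = c3 (of_nat n)"
proof (induction n rule: Rp.induct)
  case 1
  then show ?case by (simp add: c1_def c2_def c3_def)
next
  case 2
  then show ?case by (simp add: numeral_eq_Suc c1_def c2_def c3_def)
next
  case (3 n)
  have e: "coeff ([:1, 5/2:] * p) (Suc k) = coeff p (Suc k) + 5/2 * coeff p k" for p :: "complex poly" and k
    by (simp add: mult_pCons_left)
  have e0: "coeff ([:1, 5/2:] * p) 0 = coeff p 0" for p :: "complex poly"
    by (simp add: mult_pCons_left)
  have n3: "(3::nat) = Suc 2" "(2::nat) = Suc 1" by simp_all
  have i1: "c1 (x+2) = 2 * (c1 (x+1) + 5/2) - c1 x" for x
    unfolding c1_def by algebra
  have i2: "c2 (x+2) = 2 * (c2 (x+1) + 5/2 * c1 (x+1)) - c2 x" for x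
    unfolding c1_def c2_def by algebra
  have i3: "c3 (x+2) = 2 * (c3 (x+1) + 5/2 * c2 (x+1)) - c3 x" for x
    unfolding c3_def c2_def by algebra
  have s: "of_nat (Suc (Suc n)) = (of_nat n + 2 :: complex)" "of_nat (Suc n) = (of_nat n + 1 :: complex)" by simp_all
  show ?case using 3
    apply (simp only: Rp.simps coeff_diff coeff_smult)
    apply (simp only: n3 e e0 One_nat_def[symmetric] s)
    apply (simp only: i1 i2 i3 n3[symmetric])
    apply simp
    done
qed

lemma indep_fin: "simple_graph V E \<Longrightarrow> finite {S. independent_set V E S}"
  unfolding simple_graph_def independent_set_def
  by (rule finite_subset[of _ "Pow V"]) auto

lemma indep_count_zero:
  assumes g: "simple_graph V E" and k: "k > independence_number V E"
  shows "indep_count V E k = 0"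
proof -
  have "{S. independent_set V E S \<and> card S = k} = {}"
  proof (rule ccontr)
    assume "{S. independent_set V E S \<and> card S = k} \<noteq> {}"
    then obtain S where S: "independent_set V E S" "card S = k" by blast
    have "card S \<le> independence_number V E"
      unfolding independence_number_def
      using S indep_fin[OF g] by (intro Max_ge) auto
    then show False using S k by simp
  qed
  then show ?thesis unfolding indep_count_def by (metis card.empty)
qed

lemma indep_count_one:
  assumes g: "simple_graph V E"
  shows "indep_count V E 1 = card V"
proof -
  have "{S. independent_set V E S \<and> card S = 1} = (\<lambda>v. {v}) ` V"
    using g unfolding simple_graph_def independent_set_def
    by (auto simp: card_1_singleton_iff)
  then show ?thesis unfolding indep_count_def by (simp add: card_image)
qed

definition Ip :: "'a set \<Rightarrow> ('a \<Rightarrow> 'a \<Rightarrow> bool) \<Rightarrow> complex poly" where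
  "Ip V E = (\<Sum>i = 0..independence_number V E. monom (of_nat (indep_count V E i)) i)"

lemma poly_Ip: "poly (Ip V E) z = indep_poly V E z"
  unfolding Ip_def indep_poly_def by (simp add: poly_sum poly_monom)

lemma coeff_Ip:
  assumes g: "simple_graph V E"
  shows "coeff (Ip V E) k = of_nat (indep_count V E k)"
proof (cases "k \<le> independence_number V E")
  case True
  then show ?thesis unfolding Ip_def by (simp add: coeff_sum coeff_monom)
next
  case False
  then show ?thesis unfolding Ip_def using indep_count_zero[OF g, of k]
    by (simp add: coeff_sum coeff_monom)
qed

lemma choose2_real: "real (N choose 2) * 2 = real N * (real N - 1)"
  by (induction N) (auto simp: numeral_eq_Suc algebra_simps)

lemma choose3_real: "real (N choose 3) * 6 = real N * (real N - 1) * (real N - 2)"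
proof (induction N)
  case 0 then show ?case by simp
next
  case (Suc N)
  have "Suc N choose 3 = (N choose 2) + (N choose 3)"
    by (simp add: numeral_eq_Suc)
  then have "real (Suc N choose 3) * 6 = real (N choose 2) * 2 * 3 + real (N choose 3) * 6"
    by simp
  also have "\<dots> = real N * (real N - 1) * 3 + real N * (real N - 1) * (real N - 2)"
    using Suc choose2_real[of N] by simp
  finally show ?case by (simp add: algebra_simps)
qed


lemma comb_ineq:
  assumes g: "simple_graph V E"
  shows "(card V choose 3) + indep_count V E 2 * (card V - 2)
         \<le> indep_count V E 3 + (card V choose 2) * (card V - 2)"
proof -
  have fin: "finite V" using g unfolding simple_graph_def by simp
  have irr: "\<not> E v v" for v using g unfolding simple_graph_def by simp
  have EV: "E u v \<Longrightarrow> u \<in> V \<and> v \<in> V" for u v using g unfolding simple_graph_def by simp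
  define T3 where "T3 = {S. S \<subseteq> V \<and> card S = 3}"
  define I3 where "I3 = {S. independent_set V E S \<and> card S = 3}"
  define T2 where "T2 = {S. S \<subseteq> V \<and> card S = 2}"
  define I2 where "I2 = {S. independent_set V E S \<and> card S = 2}"
  have fT3: "finite T3" unfolding T3_def by (rule finite_subset[of _ "Pow V"]) (use fin in auto)
  have fT2: "finite T2" unfolding T2_def by (rule finite_subset[of _ "Pow V"]) (use fin in auto)
  have sI3: "I3 \<subseteq> T3" unfolding I3_def T3_def independent_set_def by auto
  have sI2: "I2 \<subseteq> T2" unfolding I2_def T2_def independent_set_def by auto
  have cT3: "card T3 = card I3 + card (T3 - I3)"
    using card_Diff_subset[OF finite_subset[OF sI3 fT3] sI3] card_mono[OF fT3 sI3] by simp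
  have cT2: "card T2 = card I2 + card (T2 - I2)"
    using card_Diff_subset[OF finite_subset[OF sI2 fT2] sI2] card_mono[OF fT2 sI2] by simp
  have sub: "T3 - I3 \<subseteq> (\<Union>P\<in>T2 - I2. (\<lambda>w. insert w P) ` (V - P))"
  proof
    fix S assume S: "S \<in> T3 - I3"
    then have SV: "S \<subseteq> V" and c3: "card S = 3" and ni: "\<not> independent_set V E S"
      unfolding T3_def I3_def by auto
    then obtain u v where uv: "u \<in> S" "v \<in> S" "E u v" unfolding independent_set_def by auto
    have "u \<noteq> v" using uv irr by auto
    define P where "P = {u, v}"
    have PS: "P \<subseteq> S" using uv P_def by auto
    have cP: "card P = 2" using \<open>u \<noteq> v\<close> P_def by simp
    have PT: "P \<in> T2 - I2" unfolding T2_def I2_def independent_set_def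
      using PS SV cP uv P_def by auto
    have finS: "finite S" using SV fin finite_subset by blast
    have "card (S - P) = 1" using card_Diff_subset[OF finite_subset[OF PS finS] PS] cP c3 by simp
    then obtain w where w: "S - P = {w}" by (auto simp: card_1_singleton_iff)
    then have "S = insert w P" using PS by auto
    moreover have "w \<in> V - P" using w SV by auto
    ultimately show "S \<in> (\<Union>P\<in>T2 - I2. (\<lambda>w. insert w P) ` (V - P))" using PT by blast
  qed
  have "card (T3 - I3) \<le> card (\<Union>P\<in>T2 - I2. (\<lambda>w. insert w P) ` (V - P))"
    by (rule card_mono[OF _ sub]) (use fin fT2 in auto)
  also have "\<dots> \<le> (\<Sum>P\<in>T2 - I2. card ((\<lambda>w. insert w P) ` (V - P)))"
    by (rule card_UN_le) (use fT2 in auto)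
  also have "\<dots> \<le> (\<Sum>P\<in>T2 - I2. card V - 2)"
  proof (rule sum_mono)
    fix P assume "P \<in> T2 - I2"
    then have "P \<subseteq> V" "card P = 2" unfolding T2_def by auto
    then have "card (V - P) = card V - 2" using fin by (simp add: card_Diff_subset finite_subset)
    then show "card ((\<lambda>w. insert w P) ` (V - P)) \<le> card V - 2" using card_image_le[of "V - P" "\<lambda>w. insert w P"] fin by simp
  qed
  also have "\<dots> = card (T2 - I2) * (card V - 2)" by simp
  finally have B: "card (T3 - I3) \<le> card (T2 - I2) * (card V - 2)" .
  have q1: "card V choose 3 = card T3" "card V choose 2 = card T2"
    unfolding T3_def T2_def using n_subsets[OF fin] by auto
  have q2: "indep_count V E 3 = card I3" "indep_count V E 2 = card I2"
    unfolding indep_count_def I3_def I2_def by auto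
  have eqT: "card T2 * (card V - 2) = card I2 * (card V - 2) + card (T2 - I2) * (card V - 2)"
    using cT2 by (simp add: add_mult_distrib)
  have G: "\<And>t2 k i2 b2 t3 i3 b3 c3::nat. t2 * k = i2 * k + b2 * k \<Longrightarrow> t3 = i3 + b3 \<Longrightarrow>
     b3 \<le> b2 * k \<Longrightarrow> c3 = t3 \<Longrightarrow> c3 + i2 * k \<le> i3 + t2 * k" by linarith
  show ?thesis unfolding q2 q1(2) by (rule G[OF eqT cT3 B q1(1)])
qed


theorem lemma3p8:
  fixes n :: nat
  assumes "n \<ge> 2"
  shows "\<not> (\<exists>(V :: nat set) E. simple_graph V E \<and> independence_number V E = n \<and>
            (\<forall>z::complex. 5/2 * reduced_indep_poly V E z + 1 = chebyshev_T n (5/2 * z + 1)))"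
proof
  assume "\<exists>(V :: nat set) E. simple_graph V E \<and> independence_number V E = n \<and>
            (\<forall>z::complex. 5/2 * reduced_indep_poly V E z + 1 = chebyshev_T n (5/2 * z + 1))"
  then obtain V :: "nat set" and E where g: "simple_graph V E" and al: "independence_number V E = n"
    and h: "\<And>z::complex. 5/2 * reduced_indep_poly V E z + 1 = chebyshev_T n (5/2 * z + 1)" by blast
  have "poly (smult (5/2) (Ip V E - 1) + 1) = poly (Rp n)"
    using h by (auto simp: poly_Ip poly_Rp reduced_indep_poly_def)
  then have eq: "smult (5/2) (Ip V E - 1) + 1 = Rp n" by (simp add: poly_eq_poly_eq_iff)
  have ck: "5/2 * of_nat (indep_count V E k) = coeff (Rp n) k" if "k > 0" for k
  proof -
    have "coeff (smult (5/2) (Ip V E - 1) + 1) k = coeff (Rp n) k" using eq by simp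
    then show ?thesis using that by (simp add: coeff_Ip[OF g] coeff_1)
  qed
  define a1 where "a1 = indep_count V E 1"
  define a2 where "a2 = indep_count V E 2"
  define a3 where "a3 = indep_count V E 3"
  have h1: "5/2 * of_nat a1 = c1 (of_nat n)" using ck[of 1] coeff_Rp[of n] a1_def by simp
  have h2: "5/2 * of_nat a2 = c2 (of_nat n)" using ck[of 2] coeff_Rp[of n] a2_def by simp
  have h3: "5/2 * of_nat a3 = c3 (of_nat n)" using ck[of 3] coeff_Rp[of n] a3_def by simp
  define X where "X = real n ^ 2"
  have r1: "complex_of_real (real a1) = complex_of_real X" using h1 unfolding X_def c1_def by simp
  have r2: "complex_of_real (real a2 * 12) = complex_of_real (5 * X * (X - 1))"
  proof -
    have "of_nat a2 * 12 = 5 * (of_nat n)^2 * ((of_nat n)^2 - (1::complex))"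
      using h2 unfolding c2_def by algebra
    then show ?thesis unfolding X_def by simp
  qed
  have r3: "complex_of_real (real a3 * 72) = complex_of_real (5 * X * (X - 1) * (X - 4))"
  proof -
    have "of_nat a3 * 72 = 5 * (of_nat n)^2 * ((of_nat n)^2 - (1::complex)) * ((of_nat n)^2 - 4)"
      using h3 unfolding c3_def by algebra
    then show ?thesis unfolding X_def by simp
  qed
  have e1: "real a1 = X" using r1 of_real_eq_iff by blast
  have e2: "real a2 * 12 = 5 * X * (X - 1)" using r2 of_real_eq_iff by blast
  have e3: "real a3 * 72 = 5 * X * (X - 1) * (X - 4)" using r3 of_real_eq_iff by blast
  have cV: "real (card V) = X" using e1 indep_count_one[OF g] a1_def by simp
  have X4: "X \<ge> 4" unfolding X_def using assms
    by (metis of_nat_numeral of_nat_le_iff power2_nat_le_eq_le power_mono numeral_le_iff of_nat_power num_double numeral_times_numeral power2_eq_square)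
  have ci: "real ((card V choose 3) + a2 * (card V - 2)) \<le> real (a3 + (card V choose 2) * (card V - 2))"
    using comb_ineq[OF g] a2_def a3_def by (simp only: of_nat_le_iff)
  have cv2: "card V \<ge> 2" using cV X4 by linarith
  have ci2: "real (card V choose 3) + real a2 * (X - 2) \<le> real a3 + real (card V choose 2) * (X - 2)"
    using ci cv2 cV by (simp add: of_nat_diff)
  have q3: "real (card V choose 3) = X*(X-1)*(X-2)/6" using choose3_real[of "card V"] cV by simp
  have q2: "real (card V choose 2) = X*(X-1)/2" using choose2_real[of "card V"] cV by simp
  have q4: "real a2 = 5*X*(X-1)/12" using e2 by simp
  have q5: "real a3 = 5*X*(X-1)*(X-4)/72" using e3 by simp
  have ci4: "X*(X-1)*(X-2)/6 + 5*X*(X-1)/12 * (X - 2) \<le> 5*X*(X-1)*(X-4)/72 + X*(X-1)/2 * (X - 2)"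
    using ci2 unfolding q2 q3 q4 q5 .
  have id: "72 * ((X*(X-1)*(X-2)/6 + 5*X*(X-1)/12 * (X - 2)) - (5*X*(X-1)*(X-4)/72 + X*(X-1)/2 * (X - 2)))
     = X * (X - 1) * (X + 8)" by (simp add: field_simps)
  have G2: "\<And>a b c::real. a \<le> b \<Longrightarrow> 72*(a-b) = c \<Longrightarrow> c \<le> 0" by auto
  have "X * (X - 1) * (X + 8) \<le> 0" by (rule G2[OF ci4 id])
  moreover have "X * (X - 1) * (X + 8) > 0" using X4 by simp
  ultimately show False by simp
qed

end
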